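(* For every propositional Hilbert-type calculus $\mathbf{C}$, its many-valued closure $\mathrm{MC}(\mathbf{C})$ has an effective sequential approximation.
   Context: A propositional language $\mathcal{L}$ has variables $X_1,X_2,\ldots$ and finitely many connectives with arities. A propositional Hilbert-type calculus $\mathbf{C}$ is given by a finite set of axioms (formulas) and a finite set of rules (premises $A_1,\ldots,A_n$, conclusion $C$). A finite-valued logic $\mathbf{M}$ is given by a finite set $V(\mathbf{M})$ of truth values, designated values $V^+(\mathbf{M})\subseteq V(\mathbf{M})$, and a truth function for each connective; valuations map variables to truth values and extend to formulas; a valuation satisfies $F$ if $F$ gets a designated value; a tautology is a formula satisfied by every valuation; $\mathrm{Taut}(\mathbf{M})$ is the set of tautologies; $\mathbf{M}_1\unlhd\mathbf{M}_2$ means $\mathrm{Taut}(\mathbf{M}_1)\subseteq\mathrm{Taut}(\mathbf{M}_2)$. $\mathbf{M}$ is a cover for $\mathbf{C}$ if all axioms of $\mathbf{C}$ are tautologies of $\mathbf{M}$ and for every rule every valuation satisfying all premises satisfies the conclusion. The many-valued closure $\mathrm{MC}(\mathbf{C})$ is the set of formulas that are tautologies of every finite-valued cover of $\mathbf{C}$. For a set $\mathbf{L}$ of formulas, a sequential approximation of $\mathbf{L}$ is a sequence $\langle\mathbf{M}_1,\mathbf{M}_2,\ldots\rangle$ of finite-valued logics over $\mathcal{L}$ with $\mathbf{M}_i\unlhd\mathbf{M}_j$ whenever $i\ge j$ and $\mathbf{L}=\bigcap_j\mathrm{Taut}(\mathbf{M}_j)$; it is effective if the sequence is effectively enumerated.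 *)

theory Defs
  imports Main "HOL-Library.Nat_Bijection"
begin

text \<open>A language is given by a list of arities: connective k (k < length ar)
  has arity ar ! k. Variables are X_0, X_1, ... (indexed by nat).\<close>

datatype form = Var nat | Op nat "form list"

fun wf_form :: "nat list \<Rightarrow> form \<Rightarrow> bool" where
  "wf_form ar (Var x) = True"
| "wf_form ar (Op k args) =
     (k < length ar \<and> length args = ar ! k \<and> (\<forall>a\<in>set args. wf_form ar a))"

definition formulas :: "nat list \<Rightarrow> form set" where
  "formulas ar = {F. wf_form ar F}"

record calculus =
  axioms :: "form list"
  rules :: "(form list \<times> form) list"

definition wf_calculus :: "nat list \<Rightarrow> calculus \<Rightarrow> bool" where
  "wf_calculus ar C \<longleftrightarrow>
     (\<forall>A\<in>set (axioms C). wf_form ar A) \<and>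
     (\<forall>(ps, c)\<in>set (rules C). (\<forall>p\<in>set ps. wf_form ar p) \<and> wf_form ar c)"

record fvlogic =
  nv :: nat
  des :: "nat set"
  tfun :: "nat \<Rightarrow> nat list \<Rightarrow> nat"

definition wf_logic :: "nat list \<Rightarrow> fvlogic \<Rightarrow> bool" where
  "wf_logic ar M \<longleftrightarrow> 0 < nv M \<and> des M \<subseteq> {0..<nv M} \<and>
     (\<forall>k < length ar. \<forall>xs. length xs = ar ! k \<and> set xs \<subseteq> {0..<nv M}
        \<longrightarrow> tfun M k xs < nv M)"

definition valuation :: "fvlogic \<Rightarrow> (nat \<Rightarrow> nat) \<Rightarrow> bool" where
  "valuation M v \<longleftrightarrow> (\<forall>x. v x < nv M)"

fun eval :: "fvlogic \<Rightarrow> (nat \<Rightarrow> nat) \<Rightarrow> form \<Rightarrow> nat" where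
  "eval M v (Var x) = v x"
| "eval M v (Op k args) = tfun M k (map (eval M v) args)"

definition satisfies :: "fvlogic \<Rightarrow> (nat \<Rightarrow> nat) \<Rightarrow> form \<Rightarrow> bool" where
  "satisfies M v F \<longleftrightarrow> eval M v F \<in> des M"

definition Taut :: "nat list \<Rightarrow> fvlogic \<Rightarrow> form set" where
  "Taut ar M = {F \<in> formulas ar. \<forall>v. valuation M v \<longrightarrow> satisfies M v F}"

definition is_cover :: "nat list \<Rightarrow> fvlogic \<Rightarrow> calculus \<Rightarrow> bool" where
  "is_cover ar M C \<longleftrightarrow>
     (\<forall>A\<in>set (axioms C). A \<in> Taut ar M) \<and>
     (\<forall>(ps, c)\<in>set (rules C). \<forall>v. valuation M v \<longrightarrow>
         (\<forall>p\<in>set ps. satisfies M v p) \<longrightarrow> satisfies M v c)"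

definition MC :: "nat list \<Rightarrow> calculus \<Rightarrow> form set" where
  "MC ar C = {F \<in> formulas ar. \<forall>M. wf_logic ar M \<and> is_cover ar M C \<longrightarrow> F \<in> Taut ar M}"

definition seq_approx :: "nat list \<Rightarrow> form set \<Rightarrow> (nat \<Rightarrow> fvlogic) \<Rightarrow> bool" where
  "seq_approx ar L Ms \<longleftrightarrow>
     (\<forall>i. wf_logic ar (Ms i)) \<and>
     (\<forall>i j. j \<le> i \<longrightarrow> Taut ar (Ms i) \<subseteq> Taut ar (Ms j)) \<and>
     L = (\<Inter>j. Taut ar (Ms j))"

datatype recf = Zero | Succ | Proj nat | Comp recf "recf list" | Prec recf recf | Mn recf

inductive rec_eval :: "recf \<Rightarrow> nat list \<Rightarrow> nat \<Rightarrow> bool" where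
  "rec_eval Zero xs 0"
| "rec_eval Succ (x # xs) (Suc x)"
| "i < length xs \<Longrightarrow> rec_eval (Proj i) xs (xs ! i)"
| "list_all2 (\<lambda>g y. rec_eval g xs y) gs ys \<Longrightarrow> rec_eval f ys z \<Longrightarrow> rec_eval (Comp f gs) xs z"
| "rec_eval f xs z \<Longrightarrow> rec_eval (Prec f g) (0 # xs) z"
| "rec_eval (Prec f g) (n # xs) r \<Longrightarrow> rec_eval g (r # n # xs) z \<Longrightarrow>
     rec_eval (Prec f g) (Suc n # xs) z"
| "rec_eval f (n # xs) 0 \<Longrightarrow> (\<forall>m<n. \<exists>y. y \<noteq> 0 \<and> rec_eval f (m # xs) y) \<Longrightarrow>
     rec_eval (Mn f) xs n"

fun tuples :: "nat \<Rightarrow> nat \<Rightarrow> nat list list" where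
  "tuples n 0 = [[]]"
| "tuples n (Suc m) = concat (map (\<lambda>v. map (Cons v) (tuples n m)) [0..<n])"

definition logic_code :: "nat list \<Rightarrow> fvlogic \<Rightarrow> nat" where
  "logic_code ar M = list_encode
     (nv M # map (\<lambda>v. if v \<in> des M then 1 else 0) [0..<nv M] @
      concat (map (\<lambda>k. map (tfun M k) (tuples (nv M) (ar ! k))) [0..<length ar]))"

definition effective_seq :: "nat list \<Rightarrow> (nat \<Rightarrow> fvlogic) \<Rightarrow> bool" where
  "effective_seq ar Ms \<longleftrightarrow> (\<exists>f. \<forall>i. rec_eval f [i] (logic_code ar (Ms i)))"

end

theory Submission
  imports Defs
begin


definition rc :: "nat \<Rightarrow> (nat list \<Rightarrow> nat) \<Rightarrow> bool" where
  "rc n g \<longleftrightarrow> (\<exists>f. \<forall>xs. length xs = n \<longrightarrow> rec_eval f xs (g xs))"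

lemma rc_cong: "rc n g \<Longrightarrow> (\<And>xs. length xs = n \<Longrightarrow> g xs = g' xs) \<Longrightarrow> rc n g'"
  unfolding rc_def by metis

lemma rc_proj: "i < n \<Longrightarrow> rc n (\<lambda>xs. xs ! i)"
  unfolding rc_def by (auto intro!: exI[of _ "Proj i"] rec_eval.intros(3))

lemma rc_zero: "rc n (\<lambda>xs. 0)"
  unfolding rc_def by (auto intro!: exI[of _ "Zero"] rec_eval.intros(1))

lemma rc_comp:
  assumes h: "rc m h" and gs: "\<forall>j<m. rc n (gs j)"
  shows "rc n (\<lambda>xs. h (map (\<lambda>j. gs j xs) [0..<m]))"
proof -
  obtain fh where fh: "\<forall>ys. length ys = m \<longrightarrow> rec_eval fh ys (h ys)" using h unfolding rc_def by blast
  have "\<forall>j<m. \<exists>f. \<forall>xs. length xs = n \<longrightarrow> rec_eval f xs (gs j xs)" using gs unfolding rc_def by blast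
  then obtain F where F: "\<forall>j<m. \<forall>xs. length xs = n \<longrightarrow> rec_eval (F j) xs (gs j xs)" by metis
  show ?thesis unfolding rc_def
  proof (intro exI allI impI)
    fix xs :: "nat list" assume len: "length xs = n"
    have "list_all2 (\<lambda>g y. rec_eval g xs y) (map F [0..<m]) (map (\<lambda>j. gs j xs) [0..<m])"
      using F len by (auto simp: list_all2_conv_all_nth)
    moreover have "rec_eval fh (map (\<lambda>j. gs j xs) [0..<m]) (h (map (\<lambda>j. gs j xs) [0..<m]))"
      using fh by simp
    ultimately show "rec_eval (Comp fh (map F [0..<m])) xs (h (map (\<lambda>j. gs j xs) [0..<m]))"
      by (rule rec_eval.intros)
  qed
qed

lemma rc_comp1: "rc 1 h \<Longrightarrow> rc n g \<Longrightarrow> rc n (\<lambda>xs. h [g xs])"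
  using rc_comp[of 1 h n "\<lambda>_. g"] by simp

lemma rc_comp2: "rc 2 h \<Longrightarrow> rc n g1 \<Longrightarrow> rc n g2 \<Longrightarrow> rc n (\<lambda>xs. h [g1 xs, g2 xs])"
  using rc_comp[of 2 h n "\<lambda>j. if j = 0 then g1 else g2"] by (simp add: upt_rec)

lemma rc_comp3: "rc 3 h \<Longrightarrow> rc n g1 \<Longrightarrow> rc n g2 \<Longrightarrow> rc n g3 \<Longrightarrow> rc n (\<lambda>xs. h [g1 xs, g2 xs, g3 xs])"
  using rc_comp[of 3 h n "\<lambda>j. if j = 0 then g1 else if j = 1 then g2 else g3"] by (simp add: upt_rec)

lemma rc_succ: "rc n g \<Longrightarrow> rc n (\<lambda>xs. Suc (g xs))"
proof -
  have "rc 1 (\<lambda>xs. Suc (hd xs))" unfolding rc_def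
    by (rule exI[of _ Succ]) (auto simp: length_Suc_conv intro: rec_eval.intros(2))
  then show "rc n g \<Longrightarrow> ?thesis" using rc_comp1 by fastforce
qed

lemma rc_const: "rc n (\<lambda>xs. c)"
  by (induction c) (auto intro: rc_zero rc_succ)

lemma rc_prec:
  assumes g: "rc n g" and h: "rc (Suc (Suc n)) h"
  shows "rc (Suc n) (\<lambda>xs. rec_nat (g (tl xs)) (\<lambda>k r. h (r # k # tl xs)) (hd xs))"
proof -
  obtain fg where fg: "\<forall>ys. length ys = n \<longrightarrow> rec_eval fg ys (g ys)" using g unfolding rc_def by blast
  obtain fh where fh: "\<forall>ys. length ys = Suc (Suc n) \<longrightarrow> rec_eval fh ys (h ys)" using h unfolding rc_def by blast
  have main: "rec_eval (Prec fg fh) (y # ys) (rec_nat (g ys) (\<lambda>k r. h (r # k # ys)) y)"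
    if "length ys = n" for y ys
  proof (induction y)
    case 0 then show ?case using fg that by (simp add: rec_eval.intros(5))
  next
    case (Suc y)
    have "rec_eval fh (rec_nat (g ys) (\<lambda>k r. h (r # k # ys)) y # y # ys) (h (rec_nat (g ys) (\<lambda>k r. h (r # k # ys)) y # y # ys))"
      using fh that by simp
    from rec_eval.intros(6)[OF Suc.IH this] show ?case by simp
  qed
  show ?thesis unfolding rc_def
  proof (intro exI[of _ "Prec fg fh"] allI impI)
    fix xs :: "nat list" assume "length xs = Suc n"
    then obtain y ys where "xs = y # ys" "length ys = n" by (cases xs) auto
    then show "rec_eval (Prec fg fh) xs (rec_nat (g (tl xs)) (\<lambda>k r. h (r # k # tl xs)) (hd xs))"
      using main by simp
  qed
qed

lemma rc_mn:
  assumes g: "rc (Suc n) g" and ex: "\<forall>xs. length xs = n \<longrightarrow> (\<exists>y. g (y # xs) = 0)"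
  shows "rc n (\<lambda>xs. LEAST y. g (y # xs) = 0)"
proof -
  obtain fg where fg: "\<forall>ys. length ys = Suc n \<longrightarrow> rec_eval fg ys (g ys)" using g unfolding rc_def by blast
  show ?thesis unfolding rc_def
  proof (intro exI allI impI)
    fix xs :: "nat list" assume len: "length xs = n"
    define y where "y = (LEAST y. g (y # xs) = 0)"
    obtain y0 where "g (y0 # xs) = 0" using ex len by blast
    then have 1: "g (y # xs) = 0" unfolding y_def by (rule LeastI)
    have 2: "\<forall>m<y. g (m # xs) \<noteq> 0" unfolding y_def using not_less_Least by blast
    have 3: "rec_eval fg (y # xs) 0" using fg len 1 by (metis length_Cons)
    have 4: "\<forall>m<y. \<exists>z. z \<noteq> 0 \<and> rec_eval fg (m # xs) z" using fg len 2 by (metis length_Cons)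
    show "rec_eval (Mn fg) xs y" using rec_eval.intros(7)[OF 3 4] .
  qed
qed



lemma rc_cong2: "rc m g \<Longrightarrow> m = n \<Longrightarrow> (\<And>xs. length xs = n \<Longrightarrow> g xs = g' xs) \<Longrightarrow> rc n g'"
  using rc_cong by blast

lemma rc_compA: "rc 1 (\<lambda>ys. h (ys!0)) \<Longrightarrow> rc n g \<Longrightarrow> rc n (\<lambda>xs. h (g xs))"
  by (drule (1) rc_comp1) simp

lemma rc_compB: "rc 2 (\<lambda>ys. h (ys!0) (ys!1)) \<Longrightarrow> rc n f \<Longrightarrow> rc n g \<Longrightarrow> rc n (\<lambda>xs. h (f xs) (g xs))"
  by (drule (2) rc_comp2) simp

lemma rc_add2: "rc 2 (\<lambda>ys. ys!0 + ys!1)"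
proof -
  have A: "rc 1 (\<lambda>ys. ys!0)" by (rule rc_proj) simp
  have B: "rc (Suc (Suc 1)) (\<lambda>ys. Suc (ys!0))" by (intro rc_succ rc_proj) simp
  note R = rc_prec[OF A B]
  have EQ: "rec_nat b (\<lambda>k r. Suc r) a = a + b" for a b :: nat by (induction a) auto
  show ?thesis
    by (rule rc_cong2[OF R]) (auto simp: EQ length_Suc_conv numeral_2_eq_2)
qed

lemma rc_add: "rc n f \<Longrightarrow> rc n g \<Longrightarrow> rc n (\<lambda>xs. f xs + g xs)"
  using rc_compB[OF rc_add2] .

lemma rc_mult2: "rc 2 (\<lambda>ys. ys!0 * ys!1)"
proof -
  have A: "rc 1 (\<lambda>ys. 0)" by (rule rc_const)
  have B: "rc (Suc (Suc 1)) (\<lambda>ys. ys!0 + ys!2)" by (intro rc_add rc_proj) simp_all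
  note R = rc_prec[OF A B]
  have EQ: "rec_nat 0 (\<lambda>k r. r + b) a = a * b" for a b :: nat by (induction a) auto
  show ?thesis
    by (rule rc_cong2[OF R]) (auto simp: EQ length_Suc_conv numeral_2_eq_2)
qed

lemma rc_mult: "rc n f \<Longrightarrow> rc n g \<Longrightarrow> rc n (\<lambda>xs. f xs * g xs)"
  using rc_compB[OF rc_mult2] .

lemma rc_pred1: "rc 1 (\<lambda>ys. ys!0 - 1)"
proof -
  have A: "rc 0 (\<lambda>ys. 0)" by (rule rc_const)
  have B: "rc (Suc (Suc 0)) (\<lambda>ys. ys!1)" by (intro rc_proj) simp_all
  note R = rc_prec[OF A B]
  have EQ: "rec_nat 0 (\<lambda>k r. k) a = a - 1" for a :: nat by (induction a) auto
  show ?thesis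
    by (rule rc_cong2[OF R]) (auto simp: EQ length_Suc_conv)
qed

lemma rc_monus2: "rc 2 (\<lambda>ys. ys!0 - ys!1)"
proof -
  have A: "rc 1 (\<lambda>ys. ys!0)" by (rule rc_proj) simp
  have B: "rc (Suc (Suc 1)) (\<lambda>ys. ys!0 - 1)" by (intro rc_proj rc_compA[OF rc_pred1]) simp_all
  note R = rc_prec[OF A B]
  have EQ: "rec_nat a (\<lambda>k r. r - Suc 0) b = a - b" for a b :: nat by (induction b) auto
  have "rc 2 (\<lambda>xs. rec_nat (tl xs ! 0) (\<lambda>k r. r - 1) (hd xs))" using R by (simp add: numeral_2_eq_2)
  from rc_comp2[OF this, of 2 "\<lambda>ys. ys!1" "\<lambda>ys. ys!0"] show ?thesis
    by (rule rc_cong) (auto intro: rc_proj simp: length_Suc_conv numeral_2_eq_2 EQ)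
qed

lemma rc_monus: "rc n f \<Longrightarrow> rc n g \<Longrightarrow> rc n (\<lambda>xs. f xs - g xs)"
  using rc_compB[OF rc_monus2] .

lemma rc_tri1: "rc 1 (\<lambda>ys. triangle (ys!0))"
proof -
  have A: "rc 0 (\<lambda>ys. 0)" by (rule rc_const)
  have B: "rc (Suc (Suc 0)) (\<lambda>ys. ys!0 + Suc (ys!1))" by (intro rc_add rc_succ rc_proj) simp_all
  note R = rc_prec[OF A B]
  have EQ: "rec_nat 0 (\<lambda>k r. Suc (r + k)) a = triangle a" for a :: nat by (induction a) auto
  show ?thesis
    by (rule rc_cong2[OF R]) (auto simp: EQ length_Suc_conv)
qed

lemma rc_tri: "rc n f \<Longrightarrow> rc n (\<lambda>xs. triangle (f xs))"
  using rc_compA[OF rc_tri1] .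

lemma rc_pe: "rc n f \<Longrightarrow> rc n g \<Longrightarrow> rc n (\<lambda>xs. prod_encode (f xs, g xs))"
  unfolding prod_encode_def by (simp add: rc_add rc_tri)

lemma triangle_mono: "m \<le> n \<Longrightarrow> triangle m \<le> triangle n"
  unfolding triangle_def by (intro div_le_mono mult_le_mono) auto

definition pfst :: "nat \<Rightarrow> nat" where "pfst p = fst (prod_decode p)"
definition psnd :: "nat \<Rightarrow> nat" where "psnd p = snd (prod_decode p)"

lemma pfst_pe[simp]: "pfst (prod_encode (a, b)) = a" by (simp add: pfst_def)
lemma psnd_pe[simp]: "psnd (prod_encode (a, b)) = b" by (simp add: psnd_def)

definition psum :: "nat \<Rightarrow> nat" where "psum p = (LEAST s. 1 - (triangle (Suc s) - p) = 0)"

lemma psum_eq: "psum p = pfst p + psnd p"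
proof -
  obtain a b where ab: "prod_decode p = (a, b)" by (cases "prod_decode p")
  have p: "p = triangle (a + b) + a" using prod_decode_inverse[of p] ab by (simp add: prod_encode_def)
  have "psum p = a + b" unfolding psum_def
  proof (rule Least_equality)
    show "1 - (triangle (Suc (a + b)) - p) = 0" using p by simp
  next
    fix s assume "1 - (triangle (Suc s) - p) = 0"
    then have "p < triangle (Suc s)" by simp
    show "a + b \<le> s"
    proof (rule ccontr)
      assume "\<not> a + b \<le> s"
      then have "triangle (Suc s) \<le> triangle (a + b)" by (intro triangle_mono) simp
      then show False using \<open>p < triangle (Suc s)\<close> p by simp
    qed
  qed
  then show ?thesis using ab by (simp add: pfst_def psnd_def)
qed

lemma pfst_eq: "pfst p = p - triangle (psum p)"
proof -
  obtain a b where ab: "prod_decode p = (a, b)" by (cases "prod_decode p")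
  have p: "p = triangle (a + b) + a" using prod_decode_inverse[of p] ab by (simp add: prod_encode_def)
  show ?thesis using ab p by (simp add: psum_eq pfst_def psnd_def)
qed

lemma rc_psum1: "rc 1 (\<lambda>ys. psum (ys!0))"
proof -
  have "rc 1 (\<lambda>xs. LEAST s. (\<lambda>ys. 1 - (triangle (Suc (ys!0)) - ys!1)) (s # xs) = 0)"
  proof (rule rc_mn)
    show "rc (Suc 1) (\<lambda>ys. 1 - (triangle (Suc (ys!0)) - ys!1))"
      by (intro rc_monus rc_const rc_tri rc_succ rc_proj) auto
    show "\<forall>xs. length xs = 1 \<longrightarrow> (\<exists>y. 1 - (triangle (Suc ((y # xs)!0)) - (y # xs)!1) = 0)"
    proof (intro allI impI exI)
      fix xs :: "nat list" assume "length xs = 1"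
      have "xs!0 < triangle (Suc (xs!0))" by (induction "xs!0") auto
      then show "1 - (triangle (Suc ((xs!0 # xs)!0)) - (xs!0 # xs)!1) = 0" by simp
    qed
  qed
  then show ?thesis by (rule rc_cong) (auto simp: psum_def length_Suc_conv)
qed

lemma rc_pfst: "rc n f \<Longrightarrow> rc n (\<lambda>xs. pfst (f xs))"
  unfolding pfst_eq by (intro rc_monus rc_tri rc_compA[OF rc_psum1])

lemma rc_psnd: "rc n f \<Longrightarrow> rc n (\<lambda>xs. psnd (f xs))"
proof -
  have "psnd p = psum p - pfst p" for p by (simp add: psum_eq)
  then show "rc n f \<Longrightarrow> ?thesis" by (simp only:) (intro rc_monus rc_pfst rc_compA[OF rc_psum1])
qed



definition rc1 :: "(nat \<Rightarrow> nat) \<Rightarrow> bool" where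
  "rc1 f \<longleftrightarrow> rc 1 (\<lambda>xs. f (xs!0))"

lemma rc1_id: "rc1 (\<lambda>x. x)" unfolding rc1_def by (rule rc_proj) simp
lemma rc1_const: "rc1 (\<lambda>x. c)" unfolding rc1_def by (rule rc_const)
lemma rc1_add: "rc1 f \<Longrightarrow> rc1 g \<Longrightarrow> rc1 (\<lambda>x. f x + g x)" unfolding rc1_def by (rule rc_add)
lemma rc1_mult: "rc1 f \<Longrightarrow> rc1 g \<Longrightarrow> rc1 (\<lambda>x. f x * g x)" unfolding rc1_def by (rule rc_mult)
lemma rc1_monus: "rc1 f \<Longrightarrow> rc1 g \<Longrightarrow> rc1 (\<lambda>x. f x - g x)" unfolding rc1_def by (rule rc_monus)
lemma rc1_Suc: "rc1 f \<Longrightarrow> rc1 (\<lambda>x. Suc (f x))" unfolding rc1_def by (rule rc_succ)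
lemma rc1_pe: "rc1 f \<Longrightarrow> rc1 g \<Longrightarrow> rc1 (\<lambda>x. prod_encode (f x, g x))" unfolding rc1_def by (rule rc_pe)
lemma rc1_pfst: "rc1 f \<Longrightarrow> rc1 (\<lambda>x. pfst (f x))" unfolding rc1_def by (rule rc_pfst)
lemma rc1_psnd: "rc1 f \<Longrightarrow> rc1 (\<lambda>x. psnd (f x))" unfolding rc1_def by (rule rc_psnd)
lemma rc1_comp: "rc1 f \<Longrightarrow> rc1 g \<Longrightarrow> rc1 (\<lambda>x. f (g x))" unfolding rc1_def by (rule rc_compA)

lemma rc1_loop:
  assumes b: "rc1 base" and s: "rc1 step" and c: "rc1 cnt"
  shows "rc1 (\<lambda>x. rec_nat (base x) (\<lambda>k r. step (prod_encode (x, prod_encode (k, r)))) (cnt x))"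
proof -
  have A: "rc 1 (\<lambda>ys. base (ys!0))" using b unfolding rc1_def .
  have B: "rc (Suc (Suc 1)) (\<lambda>ys. step (prod_encode (ys!2, prod_encode (ys!1, ys!0))))"
    by (intro rc_compA[where h=step, OF s[unfolded rc1_def]] rc_pe rc_proj) simp_all
  note R = rc_prec[OF A B]
  have R2: "rc 2 (\<lambda>ys. rec_nat (base (ys!1)) (\<lambda>k r. step (prod_encode (ys!1, prod_encode (k, r)))) (ys!0))"
    by (rule rc_cong2[OF R]) (auto simp: length_Suc_conv numeral_2_eq_2)
  have "rc 1 (\<lambda>xs. rec_nat (base (xs!0)) (\<lambda>k r. step (prod_encode (xs!0, prod_encode (k, r)))) (cnt (xs!0)))"
    using rc_compB[OF R2, of 1 "\<lambda>xs. cnt (xs!0)" "\<lambda>xs. xs!0"] c unfolding rc1_def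
    by (simp add: rc_proj)
  then show ?thesis unfolding rc1_def .
qed

lemma rc1_mu:
  assumes g: "rc1 g" and ex: "\<And>x. \<exists>y. g (prod_encode (x, y)) = 0"
  shows "rc1 (\<lambda>x. LEAST y. g (prod_encode (x, y)) = 0)"
proof -
  have A: "rc (Suc 1) (\<lambda>ys. g (prod_encode (ys!1, ys!0)))"
    by (intro rc_compA[where h=g, OF g[unfolded rc1_def]] rc_pe rc_proj) simp_all
  have "rc 1 (\<lambda>xs. LEAST y. (\<lambda>ys. g (prod_encode (ys!1, ys!0))) (y # xs) = 0)"
    by (rule rc_mn[OF A]) (simp add: ex)
  then show ?thesis unfolding rc1_def by simp
qed

definition rcb :: "(nat \<Rightarrow> bool) \<Rightarrow> bool" where
  "rcb P \<longleftrightarrow> rc1 (\<lambda>x. if P x then 1 else 0)"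

lemma rc1_cong: "rc1 f \<Longrightarrow> (\<And>x. f x = g x) \<Longrightarrow> rc1 g"
proof -
  assume "rc1 f" "\<And>x. f x = g x"
  then have "f = g" by auto
  with \<open>rc1 f\<close> show ?thesis by simp
qed

lemma rcb_const: "rcb (\<lambda>x. c)" unfolding rcb_def by (rule rc1_const)

lemma rcb_eq: assumes "rc1 f" "rc1 g" shows "rcb (\<lambda>x. f x = g x)"
  unfolding rcb_def
  apply (rule rc1_cong[where f="\<lambda>x. 1 - ((f x - g x) + (g x - f x))"])
   apply (intro rc1_monus rc1_add rc1_const assms)
  by auto

lemma rcb_less: assumes "rc1 f" "rc1 g" shows "rcb (\<lambda>x. f x < g x)"
  unfolding rcb_def
  apply (rule rc1_cong[where f="\<lambda>x. 1 - (1 - (g x - f x))"])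
   apply (intro rc1_monus rc1_const assms)
  by auto

lemma rcb_le: "rc1 f \<Longrightarrow> rc1 g \<Longrightarrow> rcb (\<lambda>x. f x \<le> g x)"
  using rcb_less[of f "\<lambda>x. Suc (g x)"] by (simp add: rc1_Suc less_Suc_eq_le)

lemma rcb_and: assumes "rcb P" "rcb Q" shows "rcb (\<lambda>x. P x \<and> Q x)"
  unfolding rcb_def
  apply (rule rc1_cong[where f="\<lambda>x. (if P x then 1 else 0) * (if Q x then 1 else 0)"])
   apply (intro rc1_mult assms[unfolded rcb_def])
  by auto

lemma rcb_not: assumes "rcb P" shows "rcb (\<lambda>x. \<not> P x)"
  unfolding rcb_def
  apply (rule rc1_cong[where f="\<lambda>x. 1 - (if P x then 1 else 0)"])
   apply (intro rc1_monus rc1_const assms[unfolded rcb_def])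
  by auto

lemma rcb_or: "rcb P \<Longrightarrow> rcb Q \<Longrightarrow> rcb (\<lambda>x. P x \<or> Q x)"
  using rcb_not[OF rcb_and[OF rcb_not rcb_not]] by simp

lemma rcb_imp: "rcb P \<Longrightarrow> rcb Q \<Longrightarrow> rcb (\<lambda>x. P x \<longrightarrow> Q x)"
  using rcb_or[OF rcb_not] by simp

lemma rc1_if: assumes "rcb P" "rc1 f" "rc1 g" shows "rc1 (\<lambda>x. if P x then f x else g x)"
  apply (rule rc1_cong[where f="\<lambda>x. (if P x then 1 else 0) * f x + (1 - (if P x then 1 else 0)) * g x"])
   apply (intro rc1_mult rc1_add rc1_monus rc1_const assms[unfolded rcb_def])
  by auto

lemma rc1_div: assumes f: "rc1 f" and g: "rc1 g" shows "rc1 (\<lambda>x. f x div g x)"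
proof -
  let ?h = "\<lambda>p. if g (pfst p) = 0 \<or> f (pfst p) < (psnd p + 1) * g (pfst p) then 0 else (1::nat)"
  have h: "rc1 ?h"
    by (intro rc1_if rcb_or rcb_eq rcb_less rc1_comp[OF f] rc1_comp[OF g] rc1_mult rc1_add rc1_pfst rc1_psnd rc1_id rc1_const)
  have ex: "\<exists>y. ?h (prod_encode (x, y)) = 0" for x
  proof (cases "g x = 0")
    case False
    then have "(f x + 1) * 1 \<le> (f x + 1) * g x" by (intro mult_le_mono2) simp
    then have "f x < (f x + 1) * g x" by simp
    then show ?thesis by (intro exI[of _ "f x"]) simp
  qed simp
  have eq: "(LEAST y. ?h (prod_encode (x, y)) = 0) = f x div g x" for x
  proof (cases "g x = 0")
    case True then show ?thesis by simp
  next
    case False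
    show ?thesis
    proof (rule Least_equality)
      have e: "g x * (f x div g x) + f x mod g x = f x" by (rule mult_div_mod_eq)
      have m: "f x mod g x < g x" using False by simp
      have "f x < g x * (f x div g x) + g x" using e m by linarith
      then have "f x < (f x div g x + 1) * g x" by (simp add: algebra_simps)
      then show "?h (prod_encode (x, f x div g x)) = 0" by simp
    next
      fix y assume "?h (prod_encode (x, y)) = 0"
      then have "f x < (y + 1) * g x" using False by (auto split: if_splits simp: algebra_simps)
      then have "f x div g x < y + 1" using less_mult_imp_div_less by blast
      then show "f x div g x \<le> y" by simp
    qed
  qed
  show ?thesis using rc1_mu[OF h ex] by (simp only: eq)
qed

lemma rc1_mod: assumes "rc1 f" "rc1 g" shows "rc1 (\<lambda>x. f x mod g x)"
  apply (rule rc1_cong[where f="\<lambda>x. f x - g x * (f x div g x)"])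
   apply (intro rc1_monus rc1_mult rc1_div assms)
  by (simp add: minus_mult_div_eq_mod)

lemma rc1_pow: assumes f: "rc1 f" and g: "rc1 g" shows "rc1 (\<lambda>x. g x ^ f x)"
proof -
  have "rc1 (\<lambda>x. rec_nat 1 (\<lambda>k r. (\<lambda>p. psnd (psnd p) * g (pfst p)) (prod_encode (x, prod_encode (k, r)))) (f x))"
    by (intro rc1_loop f rc1_const rc1_mult rc1_psnd rc1_id rc1_comp[OF g] rc1_pfst)
  moreover have "rec_nat 1 (\<lambda>k r. r * b) n = b ^ n" for b n :: nat by (induction n) auto
  ultimately show ?thesis by simp
qed

lemma rc1_sum:
  assumes g: "rc1 (\<lambda>p. g (pfst p) (psnd p))" and c: "rc1 cnt"
  shows "rc1 (\<lambda>x. \<Sum>j<cnt x. g x j)"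
proof -
  have "rc1 (\<lambda>x. rec_nat 0 (\<lambda>k r. (\<lambda>p. psnd (psnd p) + (\<lambda>p. g (pfst p) (psnd p)) (prod_encode (pfst p, pfst (psnd p)))) (prod_encode (x, prod_encode (k, r)))) (cnt x))"
    by (intro rc1_loop c rc1_const rc1_add rc1_psnd rc1_id rc1_comp[OF g] rc1_pfst rc1_pe)
  moreover have "rec_nat 0 (\<lambda>k r. r + g x k) n = (\<Sum>j<n. g x j)" for x n by (induction n) auto
  ultimately show ?thesis by simp
qed

lemma rcb_ball:
  assumes g: "rcb (\<lambda>p. P (pfst p) (psnd p))" and c: "rc1 cnt"
  shows "rcb (\<lambda>x. \<forall>y<cnt x. P x y)"
proof -
  define G where "G p = (if P (pfst p) (psnd p) then 1 else (0::nat))" for p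
  have g': "rc1 G" using g unfolding rcb_def G_def .
  have "rc1 (\<lambda>x. rec_nat 1 (\<lambda>k r. (\<lambda>p. psnd (psnd p) * G (prod_encode (pfst p, pfst (psnd p)))) (prod_encode (x, prod_encode (k, r)))) (cnt x))"
    by (intro rc1_loop c rc1_const rc1_mult rc1_psnd rc1_id rc1_comp[OF g'] rc1_pfst rc1_pe)
  moreover have "rec_nat 1 (\<lambda>k r. r * (if P x k then 1 else 0)) n = (if \<forall>y<n. P x y then 1 else (0::nat))" for x n
    by (induction n) (auto simp: less_Suc_eq)
  ultimately show ?thesis unfolding rcb_def by (simp add: G_def)
qed

definition etl :: "nat \<Rightarrow> nat" where "etl c = psnd (c - 1)"
definition ehd :: "nat \<Rightarrow> nat" where "ehd c = pfst (c - 1)"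
definition lk :: "nat \<Rightarrow> nat \<Rightarrow> nat" where "lk c p = ehd ((etl ^^ p) c)"

lemma lk_list_encode: "p < length L \<Longrightarrow> lk (list_encode L) p = L ! p"
proof (induction p arbitrary: L)
  case 0 then show ?case by (cases L) (auto simp: lk_def ehd_def)
next
  case (Suc p)
  then obtain y ys where L: "L = y # ys" by (cases L) auto
  have "(etl ^^ Suc p) (list_encode L) = (etl ^^ p) (list_encode ys)"
    unfolding L by (simp add: funpow_Suc_right etl_def del: funpow.simps)
  then show ?case using Suc L by (simp add: lk_def)
qed

lemma rc1_lk: assumes c: "rc1 c" and n: "rc1 n" shows "rc1 (\<lambda>x. lk (c x) (n x))"
proof -
  have "rc1 (\<lambda>x. rec_nat (c x) (\<lambda>k r. (\<lambda>p. psnd (psnd (psnd p) - 1)) (prod_encode (x, prod_encode (k, r)))) (n x))"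
    by (intro rc1_loop c n rc1_monus rc1_psnd rc1_id rc1_const)
  moreover have "rec_nat a (\<lambda>k r. etl r) m = (etl ^^ m) a" for a m by (induction m) auto
  ultimately have "rc1 (\<lambda>x. (etl ^^ n x) (c x))" by (simp add: etl_def)
  then have "rc1 (\<lambda>x. pfst ((etl ^^ n x) (c x) - 1))" by (intro rc1_pfst rc1_monus rc1_const)
  then show ?thesis by (simp add: lk_def ehd_def)
qed

definition encL :: "nat list \<Rightarrow> nat \<Rightarrow> nat" where
  "encL xs a = foldr (\<lambda>y a. Suc (prod_encode (y, a))) xs a"

lemma encL_list_encode: "encL xs (list_encode ys) = list_encode (xs @ ys)"
  by (induction xs) (auto simp: encL_def)

lemma rc1_encL:
  assumes g: "rc1 (\<lambda>p. g (pfst p) (psnd p))" and L: "rc1 L" and A: "rc1 A"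
  shows "rc1 (\<lambda>x. encL (map (g x) [0..<L x]) (A x))"
proof -
  define G where "G p = g (pfst p) (psnd p)" for p
  have g': "rc1 G" using g unfolding G_def .
  have "rc1 (\<lambda>x. rec_nat (A x) (\<lambda>k r. (\<lambda>p. Suc (prod_encode (G (prod_encode (pfst p, L (pfst p) - Suc (pfst (psnd p)))), psnd (psnd p)))) (prod_encode (x, prod_encode (k, r)))) (L x))"
    by (intro rc1_loop A L rc1_Suc rc1_pe rc1_comp[OF g'] rc1_pfst rc1_psnd rc1_monus rc1_comp[OF L] rc1_id)
  moreover have EQ: "c \<le> m \<Longrightarrow> rec_nat a (\<lambda>k r. Suc (prod_encode (g x (m - Suc k), r))) c = encL (map (g x) [m - c..<m]) a" for x m a c
  proof (induction c)
    case 0 then show ?case by (simp add: encL_def)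
  next
    case (Suc c)
    have "m - Suc c < m" using Suc.prems by simp
    then have "[m - Suc c..<m] = (m - Suc c) # [Suc (m - Suc c)..<m]" by (rule upt_conv_Cons)
    moreover have "Suc (m - Suc c) = m - c" using Suc.prems by simp
    ultimately show ?case using Suc by (simp add: encL_def)
  qed
  ultimately show ?thesis
    by (elim rc1_cong) (simp add: G_def EQ[of "L x" "L x" for x])
qed

lemma rc1_list_encode_map: "(\<forall>a\<in>set as. rc1 (E a)) \<Longrightarrow> rc1 (\<lambda>x. list_encode (map (\<lambda>a. E a x) as))"
  by (induction as) (auto intro: rc1_const rc1_Suc rc1_pe)

lemma rcb_list_all: "(\<forall>a\<in>set as. rcb (P a)) \<Longrightarrow> rcb (\<lambda>x. \<forall>a\<in>set as. P a x)"
  by (induction as) (auto intro: rcb_const rcb_and)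



lemma eval_range:
  assumes M: "wf_logic ar M" and v: "valuation M v"
  shows "wf_form ar F \<Longrightarrow> eval M v F < nv M"
proof (induction F)
  case (Var x) then show ?case using v by (simp add: valuation_def)
next
  case (Op k args)
  then have "k < length ar" "length (map (eval M v) args) = ar ! k" "set (map (eval M v) args) \<subseteq> {0..<nv M}"
    by auto
  then show ?case using M unfolding wf_logic_def by simp
qed

definition agree :: "nat list \<Rightarrow> fvlogic \<Rightarrow> fvlogic \<Rightarrow> bool" where
  "agree ar M N \<longleftrightarrow> nv M = nv N \<and> des M = des N \<and>
     (\<forall>k<length ar. \<forall>xs. length xs = ar ! k \<and> set xs \<subseteq> {0..<nv M} \<longrightarrow> tfun M k xs = tfun N k xs)"

lemma agree_eval:
  assumes M: "wf_logic ar M" and v: "valuation M v" and ag: "agree ar M N"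
  shows "wf_form ar F \<Longrightarrow> eval M v F = eval N v F"
proof (induction F)
  case (Var x) then show ?case by simp
next
  case (Op k args)
  have "k < length ar" "length (map (eval M v) args) = ar ! k" "set (map (eval M v) args) \<subseteq> {0..<nv M}"
    using Op.prems eval_range[OF M v] by auto
  moreover have eq: "map (eval M v) args = map (eval N v) args" using Op by auto
  ultimately show ?case using ag eq unfolding agree_def by (simp del: map_eq_conv)
qed

lemma agree_sat:
  assumes M: "wf_logic ar M" and v: "valuation M v" and ag: "agree ar M N" and F: "wf_form ar F"
  shows "satisfies M v F \<longleftrightarrow> satisfies N v F"
  using agree_eval[OF M v ag F] ag unfolding satisfies_def agree_def by simp

lemma agree_Taut:
  assumes M: "wf_logic ar M" and ag: "agree ar M N"
  shows "Taut ar M = Taut ar N"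
proof -
  have vv: "valuation M v \<longleftrightarrow> valuation N v" for v using ag by (simp add: valuation_def agree_def)
  show ?thesis
  proof (intro set_eqI)
    fix F
    show "F \<in> Taut ar M \<longleftrightarrow> F \<in> Taut ar N"
    proof (cases "wf_form ar F")
      case True
      have "satisfies M v F = satisfies N v F" if "valuation M v" for v by (rule agree_sat[OF M that ag True])
      then show ?thesis using vv by (auto simp: Taut_def formulas_def)
    next
      case False then show ?thesis by (simp add: Taut_def formulas_def)
    qed
  qed
qed

lemma is_cover_alt: "is_cover ar L C \<longleftrightarrow> (\<forall>A\<in>set (axioms C). A \<in> Taut ar L) \<and>
  (\<forall>ps c. (ps, c) \<in> set (rules C) \<longrightarrow> (\<forall>v. valuation L v \<longrightarrow> (\<forall>p\<in>set ps. satisfies L v p) \<longrightarrow> satisfies L v c))"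
  unfolding is_cover_def by auto

lemma agree_cover:
  assumes M: "wf_logic ar M" and ag: "agree ar M N" and C: "wf_calculus ar C"
  shows "is_cover ar M C \<longleftrightarrow> is_cover ar N C"
proof -
  have vv: "valuation M v \<longleftrightarrow> valuation N v" for v using ag by (simp add: valuation_def agree_def)
  have r: "(\<forall>v. valuation M v \<longrightarrow> (\<forall>p\<in>set ps. satisfies M v p) \<longrightarrow> satisfies M v c) \<longleftrightarrow>
           (\<forall>v. valuation N v \<longrightarrow> (\<forall>p\<in>set ps. satisfies N v p) \<longrightarrow> satisfies N v c)"
    if "(ps, c) \<in> set (rules C)" for ps c
  proof -
    have "\<forall>p\<in>set ps. wf_form ar p" "wf_form ar c" using C that unfolding wf_calculus_def by auto
    then have "satisfies M v p = satisfies N v p" if "valuation M v" "p \<in> set ps \<or> p = c" for v p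
      using agree_sat[OF M that(1) ag] that(2) by blast
    then show ?thesis using vv by blast
  qed
  show ?thesis unfolding is_cover_alt agree_Taut[OF M ag] by (simp add: r)
qed

definition lg :: "nat \<Rightarrow> fvlogic" where
  "lg n = \<lparr>nv = Suc (pfst n), des = {x. x < Suc (pfst n) \<and> lk (pfst (psnd n)) x \<noteq> 0},
     tfun = (\<lambda>k xs. lk (psnd (psnd n)) (prod_encode (k, list_encode xs)) mod Suc (pfst n))\<rparr>"

lemma lg_simps: "nv (lg n) = Suc (pfst n)" "des (lg n) = {x. x < Suc (pfst n) \<and> lk (pfst (psnd n)) x \<noteq> 0}"
  "tfun (lg n) k xs = lk (psnd (psnd n)) (prod_encode (k, list_encode xs)) mod Suc (pfst n)"
  by (simp_all add: lg_def)

lemma wf_lg: "wf_logic ar (lg n)"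
  unfolding wf_logic_def lg_simps by auto

lemma lg_repr:
  assumes M: "wf_logic ar M"
  shows "\<exists>n. agree ar M (lg n)"
proof -
  define S where "S = {prod_encode (k, list_encode xs) | k xs. k < length ar \<and> length xs = ar ! k \<and> set xs \<subseteq> {0..<nv M}}"
  have "S \<subseteq> (\<lambda>(k, xs). prod_encode (k, list_encode xs)) ` ({..<length ar} \<times> {xs. set xs \<subseteq> {0..<nv M} \<and> length xs \<le> sum_list ar})"
    unfolding S_def by (auto intro!: image_eqI member_le_sum_list)
  moreover have "finite ({..<length ar} \<times> {xs. set xs \<subseteq> {0..<nv M} \<and> length xs \<le> sum_list ar})"
    by (intro finite_cartesian_product finite_lists_length_le) auto
  ultimately have "finite S" by (meson finite_imageI finite_subset)
  then obtain B where B: "\<forall>s\<in>S. s < B" using finite_nat_set_iff_bounded by blast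
  define d where "d = list_encode (map (\<lambda>x. if x \<in> des M then 1 else 0) [0..<nv M])"
  define t where "t = list_encode (map (\<lambda>p. tfun M (pfst p) (list_decode (psnd p))) [0..<B])"
  define n where "n = prod_encode (nv M - 1, prod_encode (d, t))"
  have nv: "Suc (pfst n) = nv M" using M unfolding n_def wf_logic_def by simp
  have "des (lg n) = des M"
  proof -
    have "lk d x = (if x \<in> des M then 1 else 0)" if "x < nv M" for x
      using that unfolding d_def by (simp add: lk_list_encode)
    then show ?thesis using M nv unfolding lg_simps wf_logic_def by (auto simp: n_def split: if_splits)
  qed
  moreover have "tfun M k xs = tfun (lg n) k xs"
    if "k < length ar" "length xs = ar ! k" "set xs \<subseteq> {0..<nv M}" for k xs
  proof -
    have "prod_encode (k, list_encode xs) \<in> S" using that unfolding S_def by blast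
    then have "prod_encode (k, list_encode xs) < B" using B by blast
    then have "lk t (prod_encode (k, list_encode xs)) = tfun M k xs"
      unfolding t_def by (simp add: lk_list_encode)
    moreover have "tfun M k xs < nv M" using M that unfolding wf_logic_def by blast
    ultimately show ?thesis unfolding lg_simps nv by (simp add: n_def)
  qed
  ultimately have "agree ar M (lg n)" unfolding agree_def lg_simps nv by simp
  then show ?thesis by blast
qed

definition allD :: "fvlogic \<Rightarrow> fvlogic" where
  "allD M = M\<lparr>des := {0..<nv M}\<rparr>"

lemma allD_cover:
  assumes M: "wf_logic ar M" and C: "wf_calculus ar C"
  shows "wf_logic ar (allD M)" "is_cover ar (allD M) C" "Taut ar (allD M) = formulas ar"
proof -
  show w: "wf_logic ar (allD M)" using M unfolding wf_logic_def allD_def by simp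
  have sat: "satisfies (allD M) v F" if "valuation (allD M) v" "wf_form ar F" for v F
    using eval_range[OF w that] unfolding satisfies_def by (simp add: allD_def)
  show T: "Taut ar (allD M) = formulas ar" using sat unfolding Taut_def formulas_def by auto
  show "is_cover ar (allD M) C" unfolding is_cover_def T
    using C sat unfolding wf_calculus_def formulas_def by fast
qed

definition cl :: "nat list \<Rightarrow> calculus \<Rightarrow> nat \<Rightarrow> fvlogic" where
  "cl ar C n = (if is_cover ar (lg n) C then lg n else allD (lg n))"

lemma cl_props:
  assumes C: "wf_calculus ar C"
  shows "wf_logic ar (cl ar C n)" "is_cover ar (cl ar C n) C"
  using allD_cover[OF wf_lg C] wf_lg unfolding cl_def by auto

definition bprod :: "fvlogic \<Rightarrow> fvlogic \<Rightarrow> fvlogic" where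
  "bprod M N = \<lparr>nv = nv M * nv N,
     des = {a. a < nv M * nv N \<and> a mod nv M \<in> des M \<and> a div nv M mod nv N \<in> des N},
     tfun = (\<lambda>k xs. tfun M k (map (\<lambda>a. a mod nv M) xs) + nv M * tfun N k (map (\<lambda>a. a div nv M mod nv N) xs))\<rparr>"

lemma bprod_simps: "nv (bprod M N) = nv M * nv N"
  "des (bprod M N) = {a. a < nv M * nv N \<and> a mod nv M \<in> des M \<and> a div nv M mod nv N \<in> des N}"
  "tfun (bprod M N) k xs = tfun M k (map (\<lambda>a. a mod nv M) xs) + nv M * tfun N k (map (\<lambda>a. a div nv M mod nv N) xs)"
  by (simp_all add: bprod_def)

lemma wf_bprod: assumes "wf_logic ar M" "wf_logic ar N" shows "wf_logic ar (bprod M N)"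
proof -
  have "tfun M k (map (\<lambda>a. a mod nv M) xs) + nv M * tfun N k (map (\<lambda>a. a div nv M mod nv N) xs) < nv M * nv N"
    if "k < length ar" "length xs = ar ! k" for k xs
  proof -
    have pM: "0 < nv M" "0 < nv N" using assms by (auto simp: wf_logic_def)
    have s1: "set (map (\<lambda>a. a mod nv M) xs) \<subseteq> {0..<nv M}" using pM by auto
    have s2: "set (map (\<lambda>a. a div nv M mod nv N) xs) \<subseteq> {0..<nv N}" using pM by auto
    have a: "tfun M k (map (\<lambda>a. a mod nv M) xs) < nv M" using assms(1) that s1 unfolding wf_logic_def by (metis length_map)
    have b: "tfun N k (map (\<lambda>a. a div nv M mod nv N) xs) < nv N" using assms(2) that s2 unfolding wf_logic_def by (metis length_map)
    have "tfun M k (map (\<lambda>a. a mod nv M) xs) + nv M * tfun N k (map (\<lambda>a. a div nv M mod nv N) xs)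
          < nv M + nv M * tfun N k (map (\<lambda>a. a div nv M mod nv N) xs)" using a by simp
    also have "\<dots> = nv M * Suc (tfun N k (map (\<lambda>a. a div nv M mod nv N) xs))" by simp
    also have "\<dots> \<le> nv M * nv N" using b by (intro mult_le_mono2) simp
    finally show ?thesis .
  qed
  then show ?thesis using assms unfolding wf_logic_def bprod_simps by auto
qed

lemma eval_bprod:
  assumes M: "wf_logic ar M" and N: "wf_logic ar N" and v: "valuation (bprod M N) v"
  shows "wf_form ar F \<Longrightarrow> eval (bprod M N) v F =
    eval M (\<lambda>x. v x mod nv M) F + nv M * eval N (\<lambda>x. v x div nv M mod nv N) F"
proof (induction F)
  case (Var x)
  have "v x < nv M * nv N" using v unfolding valuation_def bprod_simps by blast
  then have "v x div nv M < nv N" by (simp add: less_mult_imp_div_less mult.commute)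
  then show ?case by simp
next
  case (Op k args)
  have vM: "valuation M (\<lambda>x. v x mod nv M)" using M unfolding valuation_def wf_logic_def by simp
  have vN: "valuation N (\<lambda>x. v x div nv M mod nv N)" using N unfolding valuation_def wf_logic_def by simp
  have r1: "map (\<lambda>a. a mod nv M) (map (eval (bprod M N) v) args) = map (eval M (\<lambda>x. v x mod nv M)) args"
    using Op eval_range[OF M vM] by auto
  have r2: "map (\<lambda>a. a div nv M mod nv N) (map (eval (bprod M N) v) args) = map (eval N (\<lambda>x. v x div nv M mod nv N)) args"
    using Op eval_range[OF M vM] eval_range[OF N vN] M by (auto simp: wf_logic_def)
  show ?case by (simp only: eval.simps bprod_simps r1 r2)
qed

lemma mod_div_combo:
  assumes "a < (m::nat)" "b < n"
  shows "(a + m * b) mod m = a" "(a + m * b) div m mod n = b" "a + m * b < m * n"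
proof -
  have m: "0 < m" using assms by simp
  show "(a + m * b) mod m = a" using assms by simp
  show "(a + m * b) div m mod n = b" using assms m by simp
  have "a + m * b < m + m * b" using assms by simp
  also have "\<dots> = m * Suc b" by simp
  also have "\<dots> \<le> m * n" using assms by (intro mult_le_mono2) simp
  finally show "a + m * b < m * n" .
qed

lemma Taut_bprod:
  assumes M: "wf_logic ar M" and N: "wf_logic ar N"
  shows "Taut ar (bprod M N) = Taut ar M \<inter> Taut ar N"
proof (intro equalityI subsetI)
  fix F assume F: "F \<in> Taut ar (bprod M N)"
  then have wF: "wf_form ar F" by (simp add: Taut_def formulas_def)
  have pM: "0 < nv M" and pN: "0 < nv N" using M N by (auto simp: wf_logic_def)
  have "satisfies M u F" if u: "valuation M u" for u
  proof -
    have le: "nv M \<le> nv M * nv N" using pN by simp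
    have v: "valuation (bprod M N) u" unfolding valuation_def bprod_simps
      using u le unfolding valuation_def by (meson less_le_trans)
    have uu: "(\<lambda>x. u x mod nv M) = u" using u by (simp add: valuation_def)
    have vN: "valuation N (\<lambda>x. u x div nv M mod nv N)" using pN by (simp add: valuation_def)
    have "satisfies (bprod M N) u F" using F v by (simp add: Taut_def)
    then have "eval M u F + nv M * eval N (\<lambda>x. u x div nv M mod nv N) F \<in> des (bprod M N)"
      unfolding satisfies_def eval_bprod[OF M N v wF] uu .
    then show ?thesis
      using mod_div_combo[OF eval_range[OF M u wF] eval_range[OF N vN wF]]
      unfolding satisfies_def bprod_simps by simp
  qed
  moreover have "satisfies N w F" if w: "valuation N w" for w
  proof -
    let ?u = "\<lambda>x. nv M * w x"
    have v: "valuation (bprod M N) ?u" using w pM unfolding valuation_def bprod_simps by simp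
    have ww: "(\<lambda>x. ?u x div nv M mod nv N) = w" using w pM by (simp add: valuation_def)
    have vM: "valuation M (\<lambda>x. ?u x mod nv M)" using pM by (simp add: valuation_def)
    have "satisfies (bprod M N) ?u F" using F v by (simp add: Taut_def)
    then have "eval M (\<lambda>x. ?u x mod nv M) F + nv M * eval N w F \<in> des (bprod M N)"
      unfolding satisfies_def eval_bprod[OF M N v wF] ww .
    then show ?thesis
      using mod_div_combo[OF eval_range[OF M vM wF] eval_range[OF N w wF]]
      unfolding satisfies_def bprod_simps by simp
  qed
  ultimately show "F \<in> Taut ar M \<inter> Taut ar N" using wF by (simp add: Taut_def formulas_def)
next
  fix F assume F: "F \<in> Taut ar M \<inter> Taut ar N"
  then have wF: "wf_form ar F" by (simp add: Taut_def formulas_def)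
  have "satisfies (bprod M N) v F" if v: "valuation (bprod M N) v" for v
  proof -
    have vM: "valuation M (\<lambda>x. v x mod nv M)" using M unfolding valuation_def wf_logic_def by simp
    have vN: "valuation N (\<lambda>x. v x div nv M mod nv N)" using N unfolding valuation_def wf_logic_def by simp
    have a: "eval M (\<lambda>x. v x mod nv M) F \<in> des M" using F vM by (simp add: Taut_def satisfies_def)
    have b: "eval N (\<lambda>x. v x div nv M mod nv N) F \<in> des N" using F vN by (simp add: Taut_def satisfies_def)
    show ?thesis using a b mod_div_combo[OF eval_range[OF M vM wF] eval_range[OF N vN wF]]
      unfolding satisfies_def eval_bprod[OF M N v wF] bprod_simps by simp
  qed
  then show "F \<in> Taut ar (bprod M N)" using wF by (simp add: Taut_def formulas_def)
qed

definition triv :: fvlogic where "triv = \<lparr>nv = 1, des = {0}, tfun = (\<lambda>k xs. 0)\<rparr>"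

lemma triv_props: "wf_logic ar triv" "Taut ar triv = formulas ar"
proof -
  show "wf_logic ar triv" by (simp add: wf_logic_def triv_def)
  have "eval triv v F = 0" if "valuation triv v" for v F
    using that by (cases F) (auto simp: triv_def valuation_def)
  then show "Taut ar triv = formulas ar" by (auto simp: Taut_def satisfies_def triv_def)
qed

primrec Pr :: "nat list \<Rightarrow> calculus \<Rightarrow> nat \<Rightarrow> fvlogic" where
  "Pr ar C 0 = triv"
| "Pr ar C (Suc i) = bprod (Pr ar C i) (cl ar C i)"

lemma Pr_props:
  assumes C: "wf_calculus ar C"
  shows "wf_logic ar (Pr ar C i) \<and> Taut ar (Pr ar C i) = formulas ar \<inter> (\<Inter>j<i. Taut ar (cl ar C j))"
proof (induction i)
  case 0 then show ?case using triv_props by simp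
next
  case (Suc i)
  then show ?case using wf_bprod Taut_bprod cl_props[OF C] by (auto simp: lessThan_Suc)
qed

lemma MC_eq:
  assumes C: "wf_calculus ar C"
  shows "MC ar C = (\<Inter>j. Taut ar (Pr ar C j))"
proof (intro equalityI subsetI)
  fix F assume F: "F \<in> MC ar C"
  then have "F \<in> formulas ar" "\<forall>j. F \<in> Taut ar (cl ar C j)"
    using cl_props[OF C] unfolding MC_def by auto
  then show "F \<in> (\<Inter>j. Taut ar (Pr ar C j))" using Pr_props[OF C] by auto
next
  fix F assume F: "F \<in> (\<Inter>j. Taut ar (Pr ar C j))"
  then have "F \<in> Taut ar (Pr ar C 0)" by blast
  then have F1: "F \<in> formulas ar" using Pr_props[OF C, of 0] by simp
  have F2: "F \<in> Taut ar (cl ar C j)" for j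
  proof -
    have "F \<in> Taut ar (Pr ar C (Suc j))" using F by blast
    then show ?thesis using Pr_props[OF C, of "Suc j"] by blast
  qed
  have "F \<in> Taut ar M" if M: "wf_logic ar M" "is_cover ar M C" for M
  proof -
    obtain n where ag: "agree ar M (lg n)" using lg_repr[OF M(1)] by blast
    then have "is_cover ar (lg n) C" using agree_cover[OF M(1) ag C] M(2) by simp
    then have "cl ar C n = lg n" by (simp add: cl_def)
    then show ?thesis using F2[of n] agree_Taut[OF M(1) ag] by simp
  qed
  then show "F \<in> MC ar C" using F1 unfolding MC_def by blast
qed

lemma seq_Pr:
  assumes C: "wf_calculus ar C"
  shows "seq_approx ar (MC ar C) (Pr ar C)"
  unfolding seq_approx_def
proof (intro conjI allI impI)
  show "wf_logic ar (Pr ar C i)" for i using Pr_props[OF C] by blast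
  show "Taut ar (Pr ar C i) \<subseteq> Taut ar (Pr ar C j)" if "j \<le> i" for i j
    using Pr_props[OF C, of i] Pr_props[OF C, of j] that by auto
  show "MC ar C = (\<Inter>j. Taut ar (Pr ar C j))" by (rule MC_eq[OF C])
qed



lemma key_digit:
  fixes a b c r :: nat
  assumes "0 < b"
  shows "(a mod (b * c * r)) div b mod c = a div b mod c"
proof -
  have "a mod (b * (c * r)) div b = a div b mod (c * r)"
    using assms by (simp add: mod_mult2_eq)
  then show ?thesis by (simp add: mult.assoc mod_mod_cancel)
qed

definition Wt :: "nat \<Rightarrow> nat" where "Wt i = (\<Prod>l<i. Suc (pfst l))"

lemma Wt_pos: "0 < Wt i" unfolding Wt_def by simp

lemma Wt_Suc: "Wt (Suc i) = Wt i * Suc (pfst i)" unfolding Wt_def by simp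

lemma Wt_split: "j < i \<Longrightarrow> \<exists>r. Wt i = Wt j * Suc (pfst j) * r"
proof (induction i)
  case 0 then show ?case by simp
next
  case (Suc i)
  show ?case
  proof (cases "j = i")
    case True then show ?thesis by (intro exI[of _ 1]) (simp add: Wt_Suc)
  next
    case False
    then obtain r where "Wt i = Wt j * Suc (pfst j) * r" using Suc by auto
    then show ?thesis by (intro exI[of _ "r * Suc (pfst i)"]) (simp add: Wt_Suc algebra_simps)
  qed
qed

lemma digit_Wt: assumes "j < i" shows "(a mod Wt i) div Wt j mod Suc (pfst j) = a div Wt j mod Suc (pfst j)"
proof -
  obtain r where "Wt i = Wt j * Suc (pfst j) * r" using Wt_split[OF assms] by blast
  then show ?thesis using key_digit[OF Wt_pos[of j], of a "Suc (pfst j)" r] by (simp only:)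
qed

lemma nv_cl: "nv (cl ar C j) = Suc (pfst j)"
  by (simp add: cl_def allD_def lg_simps)

lemma tfun_cl: "tfun (cl ar C j) = tfun (lg j)"
  by (simp add: cl_def allD_def)

lemma nv_Pr: "nv (Pr ar C i) = Wt i"
  by (induction i) (simp_all add: triv_def Wt_def bprod_simps nv_cl)

lemma des_Pr: "a \<in> des (Pr ar C i) \<longleftrightarrow> a < Wt i \<and> (\<forall>j<i. a div Wt j mod Suc (pfst j) \<in> des (cl ar C j))"
proof (induction i arbitrary: a)
  case 0 then show ?case by (auto simp: triv_def Wt_def)
next
  case (Suc i)
  have "a \<in> des (Pr ar C (Suc i)) \<longleftrightarrow> a < Wt i * Suc (pfst i) \<and> a mod Wt i \<in> des (Pr ar C i) \<and> a div Wt i mod Suc (pfst i) \<in> des (cl ar C i)"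
    by (simp add: bprod_simps nv_Pr nv_cl)
  also have "\<dots> \<longleftrightarrow> a < Wt i * Suc (pfst i) \<and> (\<forall>j<i. a div Wt j mod Suc (pfst j) \<in> des (cl ar C j)) \<and> a div Wt i mod Suc (pfst i) \<in> des (cl ar C i)"
    using Suc Wt_pos[of i] digit_Wt[of _ i a] by simp
  also have "\<dots> \<longleftrightarrow> a < Wt (Suc i) \<and> (\<forall>j<Suc i. a div Wt j mod Suc (pfst j) \<in> des (cl ar C j))"
    by (auto simp: Wt_Suc less_Suc_eq)
  finally show ?case .
qed

lemma tfun_Pr: "tfun (Pr ar C i) k xs = (\<Sum>j<i. Wt j * tfun (lg j) k (map (\<lambda>a. a div Wt j mod Suc (pfst j)) xs))"
proof (induction i arbitrary: xs)
  case 0 then show ?case by (simp add: triv_def)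
next
  case (Suc i)
  have "tfun (Pr ar C (Suc i)) k xs = tfun (Pr ar C i) k (map (\<lambda>a. a mod Wt i) xs) + Wt i * tfun (lg i) k (map (\<lambda>a. a div Wt i mod Suc (pfst i)) xs)"
    by (simp add: bprod_simps nv_Pr nv_cl tfun_cl)
  also have "tfun (Pr ar C i) k (map (\<lambda>a. a mod Wt i) xs) = (\<Sum>j<i. Wt j * tfun (lg j) k (map (\<lambda>a. a div Wt j mod Suc (pfst j)) xs))"
  proof -
    have eq: "map (\<lambda>a. a div Wt j mod Suc (pfst j)) (map (\<lambda>a. a mod Wt i) xs) = map (\<lambda>a. a div Wt j mod Suc (pfst j)) xs" if "j < i" for j
      using digit_Wt[OF that] by simp
    show ?thesis unfolding Suc.IH by (rule sum.cong) (simp_all add: eq del: map_map)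
  qed
  finally show ?case by simp
qed

definition tup :: "nat \<Rightarrow> nat \<Rightarrow> nat \<Rightarrow> nat list" where
  "tup n m q = map (\<lambda>l. q div n ^ (m - 1 - l) mod n) [0..<m]"

lemma concat_blocks:
  assumes "0 < K"
  shows "concat (map (\<lambda>v. map (f v) [0..<K]) [0..<n]) = map (\<lambda>q. f (q div K) (q mod K)) [0..<n * K]"
proof (induction n)
  case 0 then show ?case by simp
next
  case (Suc n)
  have "[0..<Suc n * K] = [0..<n * K + K]" by (simp add: add.commute)
  also have "\<dots> = [0..<n * K] @ [n * K..<n * K + K]" by (rule upt_add_eq_append) simp
  finally have "[0..<Suc n * K] = [0..<n * K] @ [n * K..<n * K + K]" .
  moreover have "[n * K..<n * K + K] = map (\<lambda>r. r + n * K) [0..<K]" by (simp add: map_add_upt add.commute)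
  moreover have "map (\<lambda>q. f (q div K) (q mod K)) (map (\<lambda>r. r + n * K) [0..<K]) = map (f n) [0..<K]"
    using assms by (auto simp: div_add1_eq)
  ultimately show ?case using Suc by simp
qed

lemma tup_Suc:
  assumes n: "0 < n" and q: "q < n * n ^ m"
  shows "tup n (Suc m) q = q div n ^ m # tup n m (q mod n ^ m)"
proof -
  have h: "q div n ^ m < n" using q by (simp add: less_mult_imp_div_less mult.commute)
  have "tup n (Suc m) q = (q div n ^ m mod n) # map (\<lambda>l. q div n ^ (m - 1 - l) mod n) [0..<m]"
    unfolding tup_def map_upt_Suc by simp
  moreover have "map (\<lambda>l. q div n ^ (m - 1 - l) mod n) [0..<m] = tup n m (q mod n ^ m)"
    unfolding tup_def
  proof (rule map_cong[OF refl])
    fix l assume "l \<in> set [0..<m]"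
    then have l: "l < m" by simp
    define d where "d = m - 1 - l"
    have md: "m = Suc d + l" using l unfolding d_def by simp
    have "n ^ (Suc d + l) = n ^ d * n * n ^ l" by (simp add: power_add mult.commute)
    then have "n ^ m = n ^ (m - 1 - l) * n * n ^ l" using md unfolding d_def by simp
    then show "q div n ^ (m - 1 - l) mod n = q mod n ^ m div n ^ (m - 1 - l) mod n"
      using key_digit[of "n ^ (m - 1 - l)" q n "n ^ l"] n by simp
  qed
  ultimately show ?thesis using h by simp
qed

lemma tuples_eq: "0 < n \<Longrightarrow> tuples n m = map (tup n m) [0..<n ^ m]"
proof (induction m)
  case 0 then show ?case by (simp add: tup_def)
next
  case (Suc m)
  have K: "0 < n ^ m" using Suc by simp
  have "tuples n (Suc m) = concat (map (\<lambda>v. map (\<lambda>q. v # tup n m q) [0..<n ^ m]) [0..<n])"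
    using Suc by (simp add: comp_def)
  also have "\<dots> = map (\<lambda>q. q div n ^ m # tup n m (q mod n ^ m)) [0..<n * n ^ m]"
    by (rule concat_blocks[OF K])
  also have "\<dots> = map (tup n (Suc m)) [0..<n ^ Suc m]"
    using tup_Suc[OF Suc.prems] by simp
  finally show ?case .
qed



fun fv :: "form \<Rightarrow> nat set" where
  "fv (Var x) = {x}"
| "fv (Op k args) = (\<Union>a\<in>set args. fv a)"

lemma finite_fv: "finite (fv F)"
  by (induction F) auto

lemma eval_cong: "(\<forall>x\<in>fv F. v x = v' x) \<Longrightarrow> eval M v F = eval M v' F"
proof (induction F)
  case (Var x) then show ?case by simp
next
  case (Op k args)
  then have "map (eval M v) args = map (eval M v') args" by auto
  then show ?case by (simp only: eval.simps)
qed

definition ev :: "nat \<Rightarrow> nat \<Rightarrow> form \<Rightarrow> nat" where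
  "ev j u F = eval (lg j) (\<lambda>x. lk u x mod Suc (pfst j)) F"

definition sat' :: "nat \<Rightarrow> nat \<Rightarrow> form \<Rightarrow> bool" where
  "sat' j u F \<longleftrightarrow> ev j u F < Suc (pfst j) \<and> lk (pfst (psnd j)) (ev j u F) \<noteq> 0"

lemma sat'_eq: "sat' j u F \<longleftrightarrow> satisfies (lg j) (\<lambda>x. lk u x mod Suc (pfst j)) F"
  unfolding sat'_def ev_def satisfies_def lg_simps by simp

definition Phi :: "calculus \<Rightarrow> nat \<Rightarrow> nat \<Rightarrow> bool" where
  "Phi C j u \<longleftrightarrow> (\<forall>A\<in>set (axioms C). sat' j u A) \<and>
     (\<forall>r\<in>set (rules C). (\<forall>p\<in>set (fst r). sat' j u p) \<longrightarrow> sat' j u (snd r))"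

definition Bd :: "nat \<Rightarrow> nat \<Rightarrow> nat" where
  "Bd V j = list_encode (replicate V (pfst j))"

definition covc :: "nat \<Rightarrow> calculus \<Rightarrow> nat \<Rightarrow> bool" where
  "covc V C j \<longleftrightarrow> (\<forall>u<Suc (Bd V j). Phi C j u)"

definition cforms :: "calculus \<Rightarrow> form set" where
  "cforms C = set (axioms C) \<union> (\<Union>r\<in>set (rules C). set (fst r) \<union> {snd r})"

lemma exists_V: "\<exists>V. \<forall>F\<in>cforms C. \<forall>x\<in>fv F. x < V"
proof -
  have "finite (cforms C)" unfolding cforms_def by auto
  then have "finite (\<Union>F\<in>cforms C. fv F)" using finite_fv by blast
  then obtain V where "\<forall>x\<in>(\<Union>F\<in>cforms C. fv F). x < V" using finite_nat_set_iff_bounded by blast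
  then show ?thesis by blast
qed

lemma prod_encode_mono: "a \<le> c \<Longrightarrow> b \<le> d \<Longrightarrow> prod_encode (a, b) \<le> prod_encode (c, d)"
  unfolding prod_encode_def using triangle_mono[of "a + b" "c + d"] by simp

lemma list_encode_mono: "list_all2 (\<le>) xs ys \<Longrightarrow> list_encode xs \<le> list_encode ys"
proof (induction rule: list_all2_induct)
  case Nil then show ?case by simp
next
  case (Cons x xs y ys) then show ?case using prod_encode_mono by simp
qed

lemma covc_correct:
  assumes C: "wf_calculus ar C" and V: "\<forall>F\<in>cforms C. \<forall>x\<in>fv F. x < V"
  shows "is_cover ar (lg j) C \<longleftrightarrow> covc V C j"
proof
  assume cov: "is_cover ar (lg j) C"
  show "covc V C j" unfolding covc_def Phi_def
  proof (intro allI impI conjI ballI)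
    fix u
    let ?v = "\<lambda>x. lk u x mod Suc (pfst j)"
    have v: "valuation (lg j) ?v" by (simp add: valuation_def lg_simps)
    fix A assume "A \<in> set (axioms C)"
    then have "A \<in> Taut ar (lg j)" using cov by (simp add: is_cover_def)
    then show "sat' j u A" using v by (simp add: Taut_def sat'_eq)
  next
    fix u r
    let ?v = "\<lambda>x. lk u x mod Suc (pfst j)"
    have v: "valuation (lg j) ?v" by (simp add: valuation_def lg_simps)
    assume r: "r \<in> set (rules C)" and ps: "\<forall>p\<in>set (fst r). sat' j u p"
    have "(fst r, snd r) \<in> set (rules C)" using r by simp
    then have "\<forall>v. valuation (lg j) v \<longrightarrow> (\<forall>p\<in>set (fst r). satisfies (lg j) v p) \<longrightarrow> satisfies (lg j) v (snd r)"
      using cov unfolding is_cover_alt by blast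
    then show "sat' j u (snd r)" using v ps by (simp add: sat'_eq)
  qed
next
  assume cc: "covc V C j"
  have ph: "Phi C j (list_encode (map v [0..<V]))" if v: "valuation (lg j) v" for v
  proof -
    have "list_all2 (\<le>) (map v [0..<V]) (replicate V (pfst j))"
      using v by (auto simp: list_all2_conv_all_nth valuation_def lg_simps less_Suc_eq_le)
    then have "list_encode (map v [0..<V]) < Suc (Bd V j)" unfolding Bd_def using list_encode_mono by (simp add: le_imp_less_Suc)
    then show ?thesis using cc by (simp add: covc_def)
  qed
  have key: "satisfies (lg j) v F \<longleftrightarrow> sat' j (list_encode (map v [0..<V])) F"
    if v: "valuation (lg j) v" and F: "F \<in> cforms C" for v F
  proof -
    let ?u = "list_encode (map v [0..<V])"
    have "\<forall>x\<in>fv F. lk ?u x mod Suc (pfst j) = v x"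
    proof
      fix x assume "x \<in> fv F"
      then have "x < V" using V F by blast
      then have "lk ?u x = v x" by (simp add: lk_list_encode)
      moreover have "v x < Suc (pfst j)" using v by (simp add: valuation_def lg_simps)
      ultimately show "lk ?u x mod Suc (pfst j) = v x" by simp
    qed
    then have "eval (lg j) (\<lambda>x. lk ?u x mod Suc (pfst j)) F = eval (lg j) v F" by (rule eval_cong)
    then show ?thesis by (simp add: sat'_eq satisfies_def)
  qed
  show "is_cover ar (lg j) C" unfolding is_cover_alt
  proof (intro conjI ballI allI impI)
    fix A assume A: "A \<in> set (axioms C)"
    then have AF: "A \<in> cforms C" by (simp add: cforms_def)
    have "wf_form ar A" using A C by (simp add: wf_calculus_def)
    moreover have "satisfies (lg j) v A" if "valuation (lg j) v" for v
      using key[OF that AF] ph[OF that] A unfolding Phi_def by blast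
    ultimately show "A \<in> Taut ar (lg j)" by (simp add: Taut_def formulas_def)
  next
    fix ps c v assume r: "(ps, c) \<in> set (rules C)" and v: "valuation (lg j) v" and ps: "\<forall>p\<in>set ps. satisfies (lg j) v p"
    let ?u = "list_encode (map v [0..<V])"
    have cF: "c \<in> cforms C" using r by (force simp: cforms_def)
    have pF: "p \<in> cforms C" if "p \<in> set ps" for p using r that by (force simp: cforms_def)
    have "\<forall>p\<in>set ps. sat' j ?u p" using key[OF v] ps pF by blast
    then have "sat' j ?u c" using ph[OF v] r unfolding Phi_def by fastforce
    then show "satisfies (lg j) v c" using key[OF v cF] by blast
  qed
qed



definition ddc :: "nat \<Rightarrow> calculus \<Rightarrow> nat \<Rightarrow> nat \<Rightarrow> bool" where
  "ddc V C j x \<longleftrightarrow> (covc V C j \<longrightarrow> lk (pfst (psnd j)) x \<noteq> 0)"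

lemma des_cl:
  assumes C: "wf_calculus ar C" and V: "\<forall>F\<in>cforms C. \<forall>x\<in>fv F. x < V" and x: "x < Suc (pfst j)"
  shows "x \<in> des (cl ar C j) \<longleftrightarrow> ddc V C j x"
  using covc_correct[OF C V, of j] x unfolding ddc_def cl_def allD_def by (simp add: lg_simps)

definition dbit :: "nat \<Rightarrow> calculus \<Rightarrow> nat \<Rightarrow> nat \<Rightarrow> nat" where
  "dbit V C i a = (if \<forall>j<i. ddc V C j (a div Wt j mod Suc (pfst j)) then 1 else 0)"

definition tb :: "nat list \<Rightarrow> nat \<Rightarrow> nat \<Rightarrow> nat \<Rightarrow> nat" where
  "tb ar i k q = (\<Sum>j<i. Wt j * (lk (psnd (psnd j)) (prod_encode (k, list_encode
      (map (\<lambda>l. (q div Wt i ^ (ar!k - 1 - l) mod Wt i) div Wt j mod Suc (pfst j)) [0..<ar!k])))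
      mod Suc (pfst j)))"

definition TBS :: "nat list \<Rightarrow> nat \<Rightarrow> nat list \<Rightarrow> nat" where
  "TBS ar i ks = foldr (\<lambda>k acc. encL (map (tb ar i k) [0..<Wt i ^ (ar!k)]) acc) ks 0"

definition lcode :: "nat list \<Rightarrow> nat \<Rightarrow> calculus \<Rightarrow> nat \<Rightarrow> nat" where
  "lcode ar V C i = Suc (prod_encode (Wt i, encL (map (dbit V C i) [0..<Wt i]) (TBS ar i [0..<length ar])))"

lemma tfun_tup: "tfun (Pr ar C i) k (tup (Wt i) (ar!k) q) = tb ar i k q"
  unfolding tfun_Pr tb_def tup_def lg_simps by (simp add: comp_def)

lemma TBS_eq: "list_encode (concat (map (\<lambda>k. map (tfun (Pr ar C i) k) (tuples (Wt i) (ar ! k))) ks)) = TBS ar i ks"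
proof (induction ks)
  case Nil then show ?case by (simp add: TBS_def)
next
  case (Cons k ks)
  have "map (tfun (Pr ar C i) k) (tuples (Wt i) (ar ! k)) = map (tb ar i k) [0..<Wt i ^ (ar!k)]"
    using tuples_eq[OF Wt_pos, of i "ar!k"] tfun_tup[of ar C i k] by simp
  then show ?case using Cons by (simp add: TBS_def encL_list_encode[symmetric])
qed

lemma lcode_eq:
  assumes C: "wf_calculus ar C" and V: "\<forall>F\<in>cforms C. \<forall>x\<in>fv F. x < V"
  shows "logic_code ar (Pr ar C i) = lcode ar V C i"
proof -
  have EQ: "map (\<lambda>v. if v \<in> des (Pr ar C i) then 1 else 0) [0..<Wt i] = map (dbit V C i) [0..<Wt i]"
  proof (rule map_cong[OF refl])
    fix a assume "a \<in> set [0..<Wt i]"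
    then have a: "a < Wt i" by simp
    have "a div Wt j mod Suc (pfst j) < Suc (pfst j)" for j by simp
    then show "(if a \<in> des (Pr ar C i) then 1 else 0) = dbit V C i a"
      unfolding des_Pr dbit_def using a des_cl[OF C V] by simp
  qed
  then show ?thesis
    unfolding logic_code_def lcode_def nv_Pr
    by (simp only: EQ list_encode.simps TBS_eq encL_list_encode[symmetric])
qed



lemma rcb_comp: "rcb P \<Longrightarrow> rc1 f \<Longrightarrow> rcb (\<lambda>x. P (f x))"
  unfolding rcb_def by (drule (1) rc1_comp) simp

lemma rc1_Wt: "rc1 Wt"
proof -
  have "rc1 (\<lambda>x. rec_nat 1 (\<lambda>k r. (\<lambda>p. psnd (psnd p) * Suc (pfst (pfst (psnd p)))) (prod_encode (x, prod_encode (k, r)))) x)"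
    by (intro rc1_loop rc1_const rc1_id rc1_mult rc1_psnd rc1_Suc rc1_pfst)
  moreover have "rec_nat 1 (\<lambda>k r. r * Suc (pfst k)) i = Wt i" for i
    by (induction i) (simp_all add: Wt_def)
  ultimately show ?thesis by simp
qed

lemma rc1_ev: "rc1 (\<lambda>p. ev (pfst p) (psnd p) F)"
proof (induction F)
  case (Var x)
  have "rc1 (\<lambda>p. lk (psnd p) x mod Suc (pfst (pfst p)))"
    by (intro rc1_mod rc1_lk rc1_psnd rc1_pfst rc1_id rc1_const rc1_Suc)
  then show ?case by (simp add: ev_def)
next
  case (Op k args)
  have "rc1 (\<lambda>p. list_encode (map (\<lambda>a. ev (pfst p) (psnd p) a) args))"
    by (rule rc1_list_encode_map) (use Op in auto)
  then have "rc1 (\<lambda>p. lk (psnd (psnd (pfst p))) (prod_encode (k, list_encode (map (\<lambda>a. ev (pfst p) (psnd p) a) args))) mod Suc (pfst (pfst p)))"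
    by (intro rc1_mod rc1_lk rc1_psnd rc1_pfst rc1_id rc1_const rc1_Suc rc1_pe)
  then show ?case by (simp add: ev_def lg_simps)
qed

lemma rcb_sat': "rcb (\<lambda>p. sat' (pfst p) (psnd p) F)"
  unfolding sat'_def
  by (intro rcb_and rcb_less rcb_not rcb_eq rc1_ev rc1_lk rc1_Suc rc1_pfst rc1_psnd rc1_id rc1_const)

lemma rcb_Phi: "rcb (\<lambda>p. Phi C (pfst p) (psnd p))"
  unfolding Phi_def
  by (intro rcb_and rcb_imp rcb_list_all ballI rcb_sat')

lemma rc1_Bd: "rc1 (Bd V)"
proof -
  have "rc1 (\<lambda>j. encL (map (\<lambda>l. pfst j) [0..<V]) 0)"
    by (rule rc1_encL[where g="\<lambda>x l. pfst x"]) (intro rc1_pfst rc1_id rc1_const)+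
  moreover have "encL (map (\<lambda>l. pfst j) [0..<V]) 0 = Bd V j" for j
    by (simp add: Bd_def encL_list_encode[of _ "[]", simplified] map_replicate_const)
  ultimately show ?thesis by simp
qed

lemma rcb_covc: "rcb (covc V C)"
proof -
  have "rcb (\<lambda>j. \<forall>u<Suc (Bd V j). Phi C j u)"
    by (intro rcb_ball rcb_Phi rc1_Suc rc1_Bd)
  then show ?thesis unfolding covc_def[abs_def] .
qed

lemma rc1_dbit: "rc1 (\<lambda>p. dbit V C (pfst p) (psnd p))"
  unfolding dbit_def ddc_def
  by (intro rc1_if rcb_ball rcb_imp rcb_not rcb_eq rcb_comp[OF rcb_covc] rc1_lk rc1_mod rc1_div
      rc1_comp[OF rc1_Wt] rc1_Suc rc1_pfst rc1_psnd rc1_id rc1_const)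

lemma rc1_tb: "rc1 (\<lambda>p. tb ar (pfst p) k (psnd p))"
  unfolding tb_def
  by (intro rc1_sum rc1_mult rc1_comp[OF rc1_Wt] rc1_mod rc1_lk rc1_pe rc1_Suc rc1_pfst rc1_psnd
      rc1_id rc1_const rc1_div rc1_pow rc1_monus rc1_encL[where A="\<lambda>x. 0", simplified encL_list_encode[of _ "[]", simplified]])

lemma rc1_TBS: "rc1 (\<lambda>i. TBS ar i ks)"
proof (induction ks)
  case Nil then show ?case by (simp add: TBS_def rc1_const)
next
  case (Cons k ks)
  have "rc1 (\<lambda>i. encL (map (tb ar i k) [0..<Wt i ^ (ar!k)]) (TBS ar i ks))"
    by (rule rc1_encL[where g="\<lambda>x q. tb ar x k q"]) (intro rc1_tb rc1_pow rc1_const rc1_Wt Cons)+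
  then show ?case by (simp add: TBS_def)
qed

lemma rc1_lcode: "rc1 (lcode ar V C)"
proof -
  have "rc1 (\<lambda>i. Suc (prod_encode (Wt i, encL (map (dbit V C i) [0..<Wt i]) (TBS ar i [0..<length ar]))))"
    by (intro rc1_Suc rc1_pe rc1_Wt rc1_encL[where g="dbit V C"] rc1_dbit rc1_TBS)
  then show ?thesis unfolding lcode_def[abs_def] .
qed

theorem proposition9:
  fixes ar :: "nat list" and C :: calculus
  assumes "wf_calculus ar C"
  shows "\<exists>Ms. seq_approx ar (MC ar C) Ms \<and> effective_seq ar Ms"
proof -
  obtain V where V: "\<forall>F\<in>cforms C. \<forall>x\<in>fv F. x < V" using exists_V by blast
  obtain f where f: "\<forall>xs. length xs = 1 \<longrightarrow> rec_eval f xs (lcode ar V C (xs!0))"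
    using rc1_lcode[of ar V C] unfolding rc1_def rc_def by blast
  have "rec_eval f [i] (logic_code ar (Pr ar C i))" for i
    using f[rule_format, of "[i]"] lcode_eq[OF assms V, of i] by simp
  then have "effective_seq ar (Pr ar C)" unfolding effective_seq_def by blast
  then show ?thesis using seq_Pr[OF assms] by blast
qed


end
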